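(* Let $k=\mathbb{F}_q$ with $q=p^m$, $p$ prime, $m\geq 1$. (1) Let $p_0,p',q_0,q'$ be four closed points of degree $2$ in $\mathbb{P}^2$ such that $\{p_0,p'\}$ is in general position and $\{q_0,q'\}$ is in general position. Then there exists $A\in\mathrm{Aut}(\mathbb{P}^2_k)=\mathrm{PGL}_3(k)$ sending $p_0$ onto $q_0$ and $p'$ onto $q'$. (2) Let $p_0,q_0$ be two closed points of degree $4$ in $\mathbb{P}^2$, each in general position. Then there exists $A\in\mathrm{Aut}(\mathbb{P}^2_k)$ sending $p_0$ onto $q_0$.
   Context: A closed point of degree $d$ of $\mathbb{P}^2_k$ corresponds to a Galois orbit of $d$ geometric points. A collection of closed points is in general position if the four geometric points involved (the two geometric components of each of the two degree-$2$ points, resp. the four geometric components of the degree-$4$ point) are such that no three are collinear. *)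

theory Defs
  imports "HOL-Analysis.Analysis"
begin

text \<open>Model: a finite field L (a type) of cardinality q^4; the base field k = F_q is the
subfield {x. x^q = x} of L.  Geometric points of P^2 are points of P^2(L), i.e. lines
through the origin of L^3, represented as the set of nonzero multiples of a nonzero vector.
Since every closed point of degree d dividing 4 has all its geometric points in
P^2(F_{q^4}) = P^2(L), closed points of degree 2 and 4 are exactly Frobenius orbits
of size 2 resp. 4 in P^2(L).\<close>

definition proj_points :: "('a::field ^ 3) set set" where
  "proj_points = {{c *s v | c. c \<noteq> 0} | v. v \<noteq> (0::'a^3)}"

definition frob_vec :: "nat \<Rightarrow> 'a::field ^ 3 \<Rightarrow> 'a ^ 3" where
  "frob_vec q v = (\<chi> i. (v $ i) ^ q)"

definition frob_pt :: "nat \<Rightarrow> ('a::field ^ 3) set \<Rightarrow> ('a ^ 3) set" where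
  "frob_pt q X = frob_vec q ` X"

definition closed_point :: "nat \<Rightarrow> nat \<Rightarrow> ('a::field ^ 3) set set \<Rightarrow> bool" where
  "closed_point q d P \<longleftrightarrow>
     (\<exists>x \<in> proj_points. P = {(frob_pt q ^^ n) x | n. True}) \<and> card P = d"

definition collinear3 :: "('a::field ^ 3) set \<Rightarrow> ('a ^ 3) set \<Rightarrow> ('a ^ 3) set \<Rightarrow> bool" where
  "collinear3 X Y Z \<longleftrightarrow>
     (\<exists>a::'a^3. a \<noteq> 0 \<and> (\<forall>v \<in> X \<union> Y \<union> Z. (\<Sum>i\<in>UNIV. a $ i * v $ i) = 0))"

definition general_position :: "('a::field ^ 3) set set \<Rightarrow> bool" where
  "general_position S \<longleftrightarrow> card S = 4 \<and>
     (\<forall>X\<in>S. \<forall>Y\<in>S. \<forall>Z\<in>S. X \<noteq> Y \<and> X \<noteq> Z \<and> Y \<noteq> Z \<longrightarrow> \<not> collinear3 X Y Z)"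

definition k_automorphism :: "nat \<Rightarrow> 'a::field ^ 3 ^ 3 \<Rightarrow> bool" where
  "k_automorphism q A \<longleftrightarrow> invertible A \<and> (\<forall>i j. (A $ i $ j) ^ q = A $ i $ j)"

definition act :: "'a::field ^ 3 ^ 3 \<Rightarrow> ('a ^ 3) set set \<Rightarrow> ('a ^ 3) set set" where
  "act A P = (\<lambda>X. (\<lambda>v. A *v v) ` X) ` P"

end

theory Submission
  imports Defs "HOL-Computational_Algebra.Primes"
begin

lemma of_nat_card_zero: "of_nat CARD('a::{field,finite}) = (0::'a)"
proof -
  have "(\<Sum>y\<in>UNIV. y + 1) = (\<Sum>y\<in>(\<lambda>y. y + 1) ` (UNIV::'a set). y)"
    by (subst sum.reindex) (auto simp: inj_on_def)
  also have "(\<lambda>y. y + 1) ` (UNIV::'a set) = UNIV"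
    by (auto simp: image_def intro: exI[of _ "_ - 1"])
  finally have "(\<Sum>y\<in>UNIV. y) + of_nat CARD('a) = (\<Sum>y\<in>(UNIV::'a set). y)"
    by (simp add: sum.distrib)
  thus ?thesis by simp
qed

lemma char_eq:
  assumes "prime p" "CARD('a::{field,finite}) = p ^ n"
  shows "CHAR('a) = p"
proof -
  have pos: "CHAR('a) > 0" by (rule finite_imp_CHAR_pos) simp
  have pr: "prime CHAR('a)" using prime_CHAR_semidom[OF pos] .
  have "CHAR('a) dvd p ^ n"
    using of_nat_card_zero[where 'a='a] assms(2) of_nat_eq_0_iff_char_dvd by metis
  hence "CHAR('a) dvd p" using pr prime_dvd_power by blast
  thus ?thesis using pr assms(1) primes_dvd_imp_eq by blast
qed

lemma power_card_eq:
  fixes x :: "'a::{field,finite}"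
  shows "x ^ CARD('a) = x"
proof (cases "x = 0")
  case False
  have "x * (\<Prod>y\<in>UNIV-{0}. x * y) = x * x ^ (CARD('a) - 1) * \<Prod>(UNIV-{0})"
    by (simp add: prod.distrib mult_ac)
  also have "x * x ^ (CARD('a) - 1) = x ^ Suc (CARD('a) - 1)"
    by (subst power_Suc) auto
  also have "Suc (CARD('a) - 1) = CARD('a)"
    using finite_UNIV_card_ge_0[where ?'a = 'a] by simp
  also have "(\<Prod>y\<in>UNIV-{0}. x * y) = (\<Prod>y\<in>UNIV-{0}. y)"
    by (rule prod.reindex_bij_witness[of _ "\<lambda>y. y / x" "\<lambda>y. x * y"]) (use False in auto)
  finally show ?thesis
    by simp
qed (use finite_UNIV_card_ge_0[where ?'a = 'a] in auto)

locale frobsetup =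
  fixes q :: nat
  assumes CARDq: "CARD('a::{field,finite}) = q ^ 4"
  and add: "\<And>x y::'a. (x + y) ^ q = x ^ q + y ^ q"
  and qpos: "q > 0"
begin
end

lemma frobsetup_intro:
  assumes "prime p" and "m \<ge> 1" and "q = p ^ m"
    and "CARD('a::{field,finite}) = q ^ 4"
  shows "frobsetup TYPE('a) q"
proof
  show "CARD('a) = q^4" by fact
  have c: "CHAR('a) = p" using char_eq[OF assms(1), of "m*4"] assms(3,4) by (simp add: power_mult)
  show "(x + y) ^ q = x ^ q + y ^ q" for x y :: 'a
    using freshmans_dream'[where m=q and n=m and x=x and y=y] c assms by simp
  show "q > 0" using assms prime_gt_0_nat by simp
qed



definition pt :: "'a::field^3 \<Rightarrow> ('a^3) set" where
  "pt v = {c *s v | c. c \<noteq> 0}"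

definition cols :: "'a::field^3 \<Rightarrow> 'a^3 \<Rightarrow> 'a^3 \<Rightarrow> 'a^3^3" where
  "cols x y z = (\<chi> i. vector [x$i, y$i, z$i])"

lemma cols_mult: "cols x y z *v c = c$1 *s x + c$2 *s y + c$3 *s z"
  by (simp add: vec_eq_iff cols_def matrix_vector_mult_def sum_3 algebra_simps)

lemma det_cols: "det (cols x y z) =
   x$1 * y$2 * z$3 + y$1 * z$2 * x$3 + z$1 * x$2 * y$3
 - x$1 * z$2 * y$3 - y$1 * x$2 * z$3 - z$1 * y$2 * x$3"
  by (simp add: det_3 cols_def)

lemma det_cols_dep: "det (cols y z (b *s y + c *s z)) = 0"
  by (simp add: det_cols algebra_simps)

lemma det_cols_scale: "det (cols (d1 *s x) (d2 *s y) (d3 *s z)) = d1 * d2 * d3 * det (cols x y z)"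
  by (simp add: det_cols algebra_simps)

lemma mv_scale: "A *v (c *s x) = c *s (A *v (x::'a::comm_ring_1^'n))"
  by (simp add: vec_eq_iff matrix_vector_mult_def sum_distrib_left algebra_simps)

lemma mv_add: "A *v (x + y) = A *v x + A *v (y::'a::comm_ring_1^'n)"
  by (simp add: vec_eq_iff matrix_vector_mult_def sum.distrib algebra_simps)

lemma inv_inj: "invertible (U::'a::field^'n^'n) \<Longrightarrow> U *v x = U *v y \<Longrightarrow> x = y"
  using inj_matrix_vector_mult by (metis injD)

lemma inv_surj: "invertible (U::'a::field^'n^'n) \<Longrightarrow> \<exists>c. U *v c = y"
  unfolding invertible_def by (metis matrix_vector_mul_assoc matrix_vector_mul_lid)

lemma ncol_inv:
  fixes x y z :: "'a::field^3"
  assumes "\<not> collinear3 (pt x) (pt y) (pt z)"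
  shows "invertible (cols x y z)"
proof (rule ccontr)
  assume "\<not> invertible (cols x y z)"
  hence "det (cols x y z) = 0" using invertible_det_nz by blast
  hence "det (transpose (cols x y z)) = 0" by simp
  hence "\<not> invertible (transpose (cols x y z))" using invertible_det_nz by blast
  hence "\<not> (\<exists>B. B ** transpose (cols x y z) = mat 1)" using invertible_left_inverse by blast
  then obtain a where a: "transpose (cols x y z) *v a = 0" "a \<noteq> 0"
    using matrix_left_invertible_ker by blast
  have e: "(transpose (cols x y z) *v a) $ i = 0" for i using a(1) by simp
  have ex: "a$1 * x$1 + a$2 * x$2 + a$3 * x$3 = 0"
    using e[of 1] by (simp add: matrix_vector_mult_def transpose_def cols_def sum_3 algebra_simps)
  have ey: "a$1 * y$1 + a$2 * y$2 + a$3 * y$3 = 0"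
    using e[of 2] by (simp add: matrix_vector_mult_def transpose_def cols_def sum_3 algebra_simps)
  have ez: "a$1 * z$1 + a$2 * z$2 + a$3 * z$3 = 0"
    using e[of 3] by (simp add: matrix_vector_mult_def transpose_def cols_def sum_3 algebra_simps)
  have key: "(\<Sum>i\<in>UNIV. a $ i * (c * w $ i)) = c * (a$1 * w$1 + a$2 * w$2 + a$3 * w$3)" for c and w :: "'a^3"
    by (simp add: sum_3 algebra_simps)
  have "collinear3 (pt x) (pt y) (pt z)"
    unfolding collinear3_def pt_def
    apply (rule exI[of _ a])
    using a(2) ex ey ez by (auto simp: key)
  thus False using assms by blast
qed

lemma ft_exists:
  fixes x1 x2 x3 x4 y1 y2 y3 y4 :: "'a::field^3"
  assumes U: "invertible (cols x1 x2 x3)" "cols x1 x2 x3 *v a = x4" "\<forall>i. a$i \<noteq> 0"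
    and V: "invertible (cols y1 y2 y3)" "cols y1 y2 y3 *v b = y4" "\<forall>i. b$i \<noteq> 0"
  shows "\<exists>A. invertible A \<and> A *v x1 = (b$1/a$1) *s y1 \<and> A *v x2 = (b$2/a$2) *s y2
     \<and> A *v x3 = (b$3/a$3) *s y3 \<and> A *v x4 = y4"
proof -
  obtain U' where U': "cols x1 x2 x3 ** U' = mat 1" "U' ** cols x1 x2 x3 = mat 1"
    using U(1) unfolding invertible_def by blast
  define W where "W = cols ((b$1/a$1) *s y1) ((b$2/a$2) *s y2) ((b$3/a$3) *s y3)"
  have "det W = (b$1/a$1) * (b$2/a$2) * (b$3/a$3) * det (cols y1 y2 y3)"
    unfolding W_def det_cols_scale ..
  moreover have "det (cols y1 y2 y3) \<noteq> 0" using V(1) invertible_det_nz by blast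
  ultimately have "det W \<noteq> 0" using U(3) V(3) by simp
  hence Winv: "invertible W" using invertible_det_nz by blast
  have U'inv: "invertible U'" using U' unfolding invertible_def by blast
  define A where "A = W ** U'"
  have Ainv: "invertible A" unfolding A_def using Winv U'inv invertible_mult by blast
  have Ac: "A *v (cols x1 x2 x3 *v c) = W *v c" for c
    unfolding A_def by (metis U'(2) matrix_vector_mul_assoc matrix_vector_mul_lid)
  have e1: "x1 = cols x1 x2 x3 *v vector [1,0,0]" by (simp add: cols_mult)
  have e2: "x2 = cols x1 x2 x3 *v vector [0,1,0]" by (simp add: cols_mult)
  have e3: "x3 = cols x1 x2 x3 *v vector [0,0,1]" by (simp add: cols_mult)
  have "A *v x4 = W *v a" using Ac U(2) by metis
  also have "\<dots> = cols y1 y2 y3 *v b" unfolding W_def cols_mult using U(3) by simp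
  finally have "A *v x4 = y4" using V(2) by simp
  moreover have "A *v x1 = (b$1/a$1) *s y1" by (subst e1, subst Ac) (simp add: W_def cols_mult)
  moreover have "A *v x2 = (b$2/a$2) *s y2" by (subst e2, subst Ac) (simp add: W_def cols_mult)
  moreover have "A *v x3 = (b$3/a$3) *s y3" by (subst e3, subst Ac) (simp add: W_def cols_mult)
  ultimately show ?thesis using Ainv by blast
qed

lemma ft_unique:
  fixes x1 x2 x3 x4 :: "'a::field^3"
  assumes U: "invertible (cols x1 x2 x3)" "cols x1 x2 x3 *v a = x4" "\<forall>i. a$i \<noteq> 0"
    and B: "B *v x1 = l1 *s x1" "B *v x2 = l2 *s x2" "B *v x3 = l3 *s x3" "B *v x4 = l4 *s x4"
  shows "B *v x = l4 *s x"
proof -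
  have lin: "B *v (cols x1 x2 x3 *v c) = c$1 * l1 *s x1 + c$2 * l2 *s x2 + c$3 * l3 *s x3" for c
    unfolding cols_mult mv_add mv_scale B by simp
  have "cols x1 x2 x3 *v (vector [a$1 * l1, a$2 * l2, a$3 * l3]) = B *v x4"
    unfolding U(2)[symmetric] lin by (simp add: cols_mult)
  also have "\<dots> = l4 *s x4" by (rule B(4))
  also have "\<dots> = cols x1 x2 x3 *v (vector [l4 * a$1, l4 * a$2, l4 * a$3])"
    unfolding U(2)[symmetric] cols_mult by (simp add: algebra_simps)
  finally have "vector [a$1 * l1, a$2 * l2, a$3 * l3] = (vector [l4 * a$1, l4 * a$2, l4 * a$3] :: 'a^3)"
    using inv_inj[OF U(1)] by blast
  hence "a$1 * l1 = l4 * a$1" "a$2 * l2 = l4 * a$2" "a$3 * l3 = l4 * a$3"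
    by (metis vector_3)+
  hence l: "l1 = l4" "l2 = l4" "l3 = l4" using U(3) by (simp_all add: mult.commute)
  obtain c where c: "cols x1 x2 x3 *v c = x" using inv_surj[OF U(1)] by blast
  show ?thesis unfolding c[symmetric] lin by (simp add: l cols_mult algebra_simps)
qed



definition prp :: "'a::field^3 \<Rightarrow> 'a^3 \<Rightarrow> bool" where
  "prp a b \<longleftrightarrow> (\<exists>c. c \<noteq> 0 \<and> a = c *s b)"

lemma prp_refl: "prp a a" unfolding prp_def by (rule exI[of _ 1]) simp
lemma prp_sym: "prp a b \<Longrightarrow> prp b a"
proof -
  assume "prp a b"
  then obtain c where c: "c \<noteq> 0" "a = c *s b" unfolding prp_def by blast
  have "b = inverse c *s a" using c by (simp add: vector_smult_assoc)
  thus ?thesis unfolding prp_def using c by (intro exI[of _ "inverse c"]) simp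
qed
lemma prp_trans: "prp a b \<Longrightarrow> prp b c \<Longrightarrow> prp a c"
proof -
  assume "prp a b" "prp b c"
  then obtain c1 c2 where c: "c1 \<noteq> 0" "a = c1 *s b" "c2 \<noteq> 0" "b = c2 *s c" unfolding prp_def by blast
  hence "a = (c1 * c2) *s c" by (simp add: vector_smult_assoc)
  thus ?thesis unfolding prp_def using c by (intro exI[of _ "c1 * c2"]) simp
qed
lemma prp_mv: "prp a b \<Longrightarrow> prp (M *v a) (M *v b)"
  unfolding prp_def by (auto simp: mv_scale)
lemma prp_pt: "prp a b \<Longrightarrow> pt a = pt b"
proof -
  assume "prp a b"
  then obtain c where c: "c \<noteq> 0" "a = c *s b" unfolding prp_def by blast
  show ?thesis
  proof
    show "pt a \<subseteq> pt b"
    proof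
      fix x assume "x \<in> pt a"
      then obtain d where d: "d \<noteq> 0" "x = d *s a" unfolding pt_def by blast
      hence "x = (d * c) *s b" using c by (simp add: vector_smult_assoc)
      thus "x \<in> pt b" unfolding pt_def using c d by auto
    qed
    show "pt b \<subseteq> pt a"
    proof
      fix x assume "x \<in> pt b"
      then obtain d where d: "d \<noteq> 0" "x = d *s b" unfolding pt_def by blast
      hence "x = (d / c) *s a" using c by (simp add: vector_smult_assoc)
      moreover have "d / c \<noteq> 0" using c d by simp
      ultimately show "x \<in> pt a" unfolding pt_def by blast
    qed
  qed
qed
lemma pt_prp: "pt a = pt b \<Longrightarrow> prp a b"
proof -
  assume "pt a = pt b"
  moreover have "a \<in> pt a" unfolding pt_def by (rule CollectI, rule exI[of _ 1]) simp
  ultimately have "a \<in> pt b" by simp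
  then obtain c where "c \<noteq> 0" "a = c *s b" unfolding pt_def by blast
  thus ?thesis unfolding prp_def by blast
qed

lemma image_pt: "(\<lambda>v. A *v v) ` pt x = pt (A *v x)"
proof
  show "(\<lambda>v. A *v v) ` pt x \<subseteq> pt (A *v x)" unfolding pt_def by (auto simp: mv_scale)
  show "pt (A *v x) \<subseteq> (\<lambda>v. A *v v) ` pt x"
  proof
    fix y assume "y \<in> pt (A *v x)"
    then obtain c where c: "c \<noteq> 0" "y = c *s (A *v x)" unfolding pt_def by blast
    hence "y = A *v (c *s x)" by (simp add: mv_scale)
    moreover have "c *s x \<in> pt x" unfolding pt_def using c by blast
    ultimately show "y \<in> (\<lambda>v. A *v v) ` pt x" by blast
  qed
qed

lemma axis_col: "(M *v axis j 1) $ i = M $ i $ (j::'n::finite)"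
proof -
  have "(M *v axis j 1) $ i = (\<Sum>k\<in>UNIV. M $ i $ k * (if k = j then 1 else 0))"
    unfolding matrix_vector_mult_def axis_def by simp
  also have "\<dots> = (\<Sum>k\<in>UNIV. if k = j then M $ i $ k else 0)"
    by (rule sum.cong) simp_all
  also have "\<dots> = M $ i $ j" by simp
  finally show ?thesis .
qed

context frobsetup
begin

abbreviation F :: "'a^3 \<Rightarrow> 'a^3" where "F \<equiv> frob_vec q"

definition fm :: "'a^3^3 \<Rightarrow> 'a^3^3" where "fm A = (\<chi> i j. (A$i$j)^q)"

lemma pq4: "(x::'a) ^ (q^4) = x"
  using power_card_eq[of x] CARDq by simp

lemma neg: "(- x::'a) ^ q = - (x ^ q)"
proof -
  have "(x + - x) ^ q = x ^ q + (- x) ^ q" by (rule add)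
  hence h: "x ^ q + (- x) ^ q = 0" by (simp add: zero_power[OF qpos])
  have "(- x) ^ q = (x ^ q + (- x) ^ q) - x ^ q" by simp
  thus ?thesis using h by simp
qed

lemma injq: "(x::'a) ^ q = y ^ q \<Longrightarrow> x = y"
proof -
  assume "x ^ q = y ^ q"
  moreover have "(x + - y) ^ q = x ^ q + - (y ^ q)" using add[of x "-y"] neg[of y] by simp
  ultimately have "(x + - y) ^ q = 0" by simp
  hence "x + - y = 0" using qpos by simp
  thus "x = y" by (simp add: algebra_simps)
qed

lemma surjq: "\<exists>y::'a. y ^ q = x"
proof -
  have "inj (\<lambda>x::'a. x ^ q)" by (auto intro: injI injq)
  hence "surj (\<lambda>x::'a. x ^ q)" using finite_UNIV_inj_surj[of "\<lambda>x::'a. x ^ q"] by simp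
  thus ?thesis by (metis surjD)
qed

lemma sumq: "(\<Sum>i\<in>(UNIV::3 set). f i :: 'a) ^ q = (\<Sum>i\<in>UNIV. (f i) ^ q)"
  by (simp add: sum_3 add)

lemma F_scale: "F (c *s v) = c ^ q *s F v"
  by (simp add: frob_vec_def vec_eq_iff power_mult_distrib)

lemma F_mv: "F (A *v v) = fm A *v F v"
  by (simp add: frob_vec_def fm_def vec_eq_iff matrix_vector_mult_def sumq power_mult_distrib)

lemma fm_mult: "fm (A ** B) = fm A ** fm B"
  by (simp add: fm_def vec_eq_iff matrix_matrix_mult_def sumq power_mult_distrib)

lemma fm_mat1: "fm (mat 1) = mat 1"
  using qpos by (simp add: fm_def vec_eq_iff mat_def)

lemma fm_inv: "invertible A \<Longrightarrow> invertible (fm A)"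
  unfolding invertible_def by (metis fm_mult fm_mat1)

lemma prp_F: "prp a b \<Longrightarrow> prp (F a) (F b)"
proof -
  assume "prp a b"
  then obtain c where c: "c \<noteq> 0" "a = c *s b" unfolding prp_def by blast
  hence "F a = c ^ q *s F b" by (simp add: F_scale)
  thus ?thesis unfolding prp_def using c by (intro exI[of _ "c ^ q"]) simp
qed

lemma frob_pt_pt: "frob_pt q (pt v) = pt (F v)"
proof
  show "frob_pt q (pt v) \<subseteq> pt (F v)"
    unfolding frob_pt_def pt_def by (auto simp: F_scale)
  show "pt (F v) \<subseteq> frob_pt q (pt v)"
  proof
    fix x assume "x \<in> pt (F v)"
    then obtain c where c: "c \<noteq> 0" "x = c *s F v" unfolding pt_def by auto
    obtain d where d: "d ^ q = c" using surjq by blast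
    have "d \<noteq> 0" using c d qpos by auto
    thus "x \<in> frob_pt q (pt v)" unfolding frob_pt_def pt_def
      using c d by (auto simp: F_scale image_def)
  qed
qed

lemma F4: "F (F (F (F v))) = v"
proof -
  have "((((x::'a) ^ q) ^ q) ^ q) ^ q = x" for x
    using pq4[of x] by (simp add: power_mult[symmetric] power4_eq_xxxx mult.assoc)
  thus ?thesis by (simp add: frob_vec_def vec_eq_iff)
qed

lemma Fpow4: "F ^^ 4 = id"
  by (rule ext) (simp add: numeral_eq_Suc F4)

lemma Fpow_mod: "(F ^^ n) v = (F ^^ (n mod 4)) v"
proof -
  have "(F ^^ n) = F ^^ (n mod 4 + 4 * (n div 4))" by simp
  also have "\<dots> = F ^^ (n mod 4) \<circ> (F ^^ 4) ^^ (n div 4)" by (simp only: funpow_add funpow_mult)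
  also have "(F ^^ 4) ^^ (n div 4) = id" by (simp add: Fpow4 id_funpow)
  finally show ?thesis by simp
qed

lemma frob_pow_pt: "(frob_pt q ^^ n) (pt v) = pt ((F ^^ n) v)"
  by (induction n) (simp_all add: frob_pt_pt)

lemma orbit: "{(frob_pt q ^^ n) (pt v) | n. True} = {pt v, pt (F v), pt (F (F v)), pt (F (F (F v)))}"
proof -
  have e: "(frob_pt q ^^ n) (pt v) \<in> {pt v, pt (F v), pt (F (F v)), pt (F (F (F v)))}" for n
  proof -
    have "n mod 4 < 4" by simp
    hence "n mod 4 = 0 \<or> n mod 4 = 1 \<or> n mod 4 = 2 \<or> n mod 4 = 3" by linarith
    moreover have f: "(F^^0) v = v" "(F^^1) v = F v" "(F^^2) v = F (F v)" "(F^^3) v = F (F (F v))"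
      by (simp_all add: numeral_eq_Suc)
    ultimately show ?thesis unfolding frob_pow_pt Fpow_mod[of n] by (elim disjE) (simp_all only: f, simp_all)
  qed
  have w: "pt v = (frob_pt q ^^ 0) (pt v)" "pt (F v) = (frob_pt q ^^ 1) (pt v)"
    "pt (F (F v)) = (frob_pt q ^^ 2) (pt v)" "pt (F (F (F v))) = (frob_pt q ^^ 3) (pt v)"
    unfolding frob_pow_pt by (simp_all add: numeral_eq_Suc)
  show ?thesis
  proof
    show "{(frob_pt q ^^ n) (pt v) | n. True} \<subseteq> {pt v, pt (F v), pt (F (F v)), pt (F (F (F v)))}"
      using e by blast
    show "{pt v, pt (F v), pt (F (F v)), pt (F (F (F v)))} \<subseteq> {(frob_pt q ^^ n) (pt v) | n. True}"
      using w by blast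
  qed
qed

end


lemma lt4: "(i::nat) < 4 \<longleftrightarrow> i = 0 \<or> i = 1 \<or> i = 2 \<or> i = 3" by auto

lemma coef:
  fixes u :: "nat \<Rightarrow> 'a::field^3"
  assumes g: "\<And>i j k. i<4 \<Longrightarrow> j<4 \<Longrightarrow> k<4 \<Longrightarrow> i\<noteq>j \<Longrightarrow> i\<noteq>k \<Longrightarrow> j\<noteq>k \<Longrightarrow> invertible (cols (u i) (u j) (u k))"
  shows "\<exists>a. cols (u 0) (u 1) (u 2) *v a = u 3 \<and> (\<forall>i. a$i \<noteq> 0)"
proof -
  obtain a where a: "cols (u 0) (u 1) (u 2) *v a = u 3" using inv_surj[OF g[of 0 1 2]] by auto
  hence u3: "u 3 = a$1 *s u 0 + a$2 *s u 1 + a$3 *s u 2" by (simp add: cols_mult)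
  have nz: "det (cols (u i) (u j) (u k)) \<noteq> 0" if "i<4" "j<4" "k<4" "i\<noteq>j" "i\<noteq>k" "j\<noteq>k" for i j k
    using g[OF that] invertible_det_nz by blast
  have "a$1 \<noteq> 0"
  proof
    assume "a$1 = 0"
    hence "u 3 = a$2 *s u 1 + a$3 *s u 2" using u3 by simp
    hence "det (cols (u 1) (u 2) (u 3)) = 0" by (simp add: det_cols_dep)
    thus False using nz[of 1 2 3] by simp
  qed
  moreover have "a$2 \<noteq> 0"
  proof
    assume "a$2 = 0"
    hence "u 3 = a$1 *s u 0 + a$3 *s u 2" using u3 by simp
    hence "det (cols (u 0) (u 2) (u 3)) = 0" by (simp add: det_cols_dep)
    thus False using nz[of 0 2 3] by simp
  qed
  moreover have "a$3 \<noteq> 0"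
  proof
    assume "a$3 = 0"
    hence "u 3 = a$1 *s u 0 + a$2 *s u 1" using u3 by simp
    hence "det (cols (u 0) (u 1) (u 3)) = 0" by (simp add: det_cols_dep)
    thus False using nz[of 0 1 3] by simp
  qed
  ultimately show ?thesis using a by (auto simp: forall_3)
qed

lemma prp_scale: "c \<noteq> 0 \<Longrightarrow> prp (c *s y) y"
  unfolding prp_def by blast

context frobsetup
begin

lemma key:
  fixes u w :: "nat \<Rightarrow> 'a^3"
  assumes gu: "\<And>i j k. i<4 \<Longrightarrow> j<4 \<Longrightarrow> k<4 \<Longrightarrow> i\<noteq>j \<Longrightarrow> i\<noteq>k \<Longrightarrow> j\<noteq>k \<Longrightarrow> invertible (cols (u i) (u j) (u k))"
  and gw: "\<And>i j k. i<4 \<Longrightarrow> j<4 \<Longrightarrow> k<4 \<Longrightarrow> i\<noteq>j \<Longrightarrow> i\<noteq>k \<Longrightarrow> j\<noteq>k \<Longrightarrow> invertible (cols (w i) (w j) (w k))"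
  and fr: "\<And>j. j<4 \<Longrightarrow> \<exists>i<4. prp (F (u i)) (u j) \<and> prp (F (w i)) (w j)"
  shows "\<exists>A. k_automorphism q A \<and> (\<forall>i<4. prp (A *v u i) (w i))"
proof -
  obtain a where a: "cols (u 0) (u 1) (u 2) *v a = u 3" "\<forall>i. a$i \<noteq> 0" using coef[where u=u, OF gu] by blast
  obtain b where b: "cols (w 0) (w 1) (w 2) *v b = w 3" "\<forall>i. b$i \<noteq> 0" using coef[where u=w, OF gw] by blast
  obtain A where A: "invertible A" "A *v u 0 = (b$1/a$1) *s w 0" "A *v u 1 = (b$2/a$2) *s w 1"
     "A *v u 2 = (b$3/a$3) *s w 2" "A *v u 3 = w 3"
    using ft_exists[OF gu[of 0 1 2] a gw[of 0 1 2] b] by auto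
  have hA: "prp (A *v u i) (w i)" if "i < 4" for i
  proof -
    have "i = 0 \<or> i = 1 \<or> i = 2 \<or> i = 3" using that by auto
    thus ?thesis using A a(2) b(2) by (auto simp: prp_scale prp_refl)
  qed
  obtain A' where A': "A ** A' = mat 1" "A' ** A = mat 1" using A(1) unfolding invertible_def by blast
  have hA': "prp (A' *v w i) (u i)" if "i < 4" for i
  proof -
    have "prp (A' *v (A *v u i)) (A' *v w i)" using prp_mv hA[OF that] by blast
    moreover have "A' *v (A *v u i) = u i" by (simp add: matrix_vector_mul_assoc A'(2))
    ultimately show ?thesis using prp_sym by metis
  qed
  define D where "D = A' ** fm A"
  have hD: "\<exists>l. D *v u j = l *s u j" if j4: "j < 4" for j
  proof -
    obtain i where i: "i < 4" "prp (F (u i)) (u j)" "prp (F (w i)) (w j)" using fr[OF j4] by blast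
    have "prp (fm A *v u j) (fm A *v F (u i))" using prp_mv prp_sym i(2) by blast
    moreover have "fm A *v F (u i) = F (A *v u i)" by (simp add: F_mv)
    moreover have "prp (F (A *v u i)) (F (w i))" using prp_F hA[OF i(1)] by blast
    ultimately have "prp (fm A *v u j) (w j)" using i(3) prp_trans by metis
    hence "prp (A' *v (fm A *v u j)) (A' *v w j)" using prp_mv by blast
    hence "prp (D *v u j) (u j)" using hA'[OF j4] prp_trans unfolding D_def
      by (metis matrix_vector_mul_assoc)
    thus ?thesis unfolding prp_def by blast
  qed
  obtain l1 where l1: "D *v u 0 = l1 *s u 0" using hD[of 0] by auto
  obtain l2 where l2: "D *v u 1 = l2 *s u 1" using hD[of 1] by auto
  obtain l3 where l3: "D *v u 2 = l3 *s u 2" using hD[of 2] by auto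
  obtain l where l4: "D *v u 3 = l *s u 3" using hD[of 3] by auto
  have Dx: "D *v x = l *s x" for x using ft_unique[OF gu[of 0 1 2] a l1 l2 l3 l4] by simp
  have fmx: "fm A *v x = l *s (A *v x)" for x
  proof -
    have "A ** D = fm A" unfolding D_def by (simp add: matrix_mul_assoc A'(1))
    hence "fm A *v x = A *v (D *v x)" by (simp add: matrix_vector_mul_assoc)
    thus ?thesis by (simp add: Dx mv_scale)
  qed
  have ent: "(A$i$j) ^ q = l * A$i$j" for i j
  proof -
    have "(A$i$j) ^ q = (fm A *v axis j 1) $ i" by (simp add: axis_col fm_def)
    also have "\<dots> = l * A$i$j" by (simp add: fmx axis_col)
    finally show ?thesis .
  qed
  obtain i0 j0 where c: "A $ i0 $ j0 \<noteq> 0"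
  proof (rule ccontr)
    assume "\<not> thesis"
    hence z: "A $ i $ j = 0" for i j using that by blast
    have "(A ** A') $ 1 $ 1 = 0" by (simp add: matrix_matrix_mult_def z)
    thus False using A'(1) by (simp add: mat_def)
  qed
  define c where "c = A $ i0 $ j0"
  have cnz: "c \<noteq> 0" using c c_def by simp
  have lnz: "l \<noteq> 0" using ent[of i0 j0] cnz c_def by auto
  define A2 where "A2 = (\<chi> i j. A $ i $ j / c)"
  have A2x: "A2 *v x = inverse c *s (A *v x)" for x
    by (simp add: A2_def vec_eq_iff matrix_vector_mult_def sum_distrib_left field_simps)
  have "\<forall>x. A2 *v x = 0 \<longrightarrow> x = 0"
  proof (intro allI impI)
    fix x assume "A2 *v x = 0"
    hence "A *v x = 0" using cnz by (simp add: A2x del: vector_smult_assoc)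
    hence "A' *v (A *v x) = 0" by simp
    thus "x = 0" by (simp add: matrix_vector_mul_assoc A'(2))
  qed
  hence "invertible A2" using invertible_left_inverse matrix_left_invertible_ker by blast
  moreover have "\<forall>i j. (A2 $ i $ j) ^ q = A2 $ i $ j"
  proof (intro allI)
    fix i j
    have "(A2 $ i $ j) ^ q = (A $ i $ j) ^ q / c ^ q" by (simp add: A2_def power_divide)
    also have "\<dots> = (l * A $ i $ j) / (l * c)" using ent[of i j] ent[of i0 j0] c_def by simp
    also have "\<dots> = A2 $ i $ j" using lnz by (simp add: A2_def)
    finally show "(A2 $ i $ j) ^ q = A2 $ i $ j" .
  qed
  moreover have "\<forall>i<4. prp (A2 *v u i) (w i)"
  proof (intro allI impI)
    fix i :: nat assume "i < 4"
    have "prp (inverse c *s (A *v u i)) (A *v u i)" using cnz by (intro prp_scale) simp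
    thus "prp (A2 *v u i) (w i)" unfolding A2x using prp_trans hA[OF \<open>i < 4\<close>] by blast
  qed
  ultimately have "k_automorphism q A2 \<and> (\<forall>i<4. prp (A2 *v u i) (w i))"
    unfolding k_automorphism_def by simp
  thus ?thesis by blast
qed

end


lemma card4_distinct:
  assumes "card {a,b,c,d} = 4"
  shows "a\<noteq>b \<and> a\<noteq>c \<and> a\<noteq>d \<and> b\<noteq>c \<and> b\<noteq>d \<and> c\<noteq>d"
  using assms by (auto simp: card_insert_if split: if_splits)

lemma gp_inv:
  fixes u :: "nat \<Rightarrow> 'a::field^3"
  assumes gp: "general_position {pt (u 0), pt (u 1), pt (u 2), pt (u 3)}"
    and ijk: "i<4" "j<4" "k<4" "i\<noteq>j" "i\<noteq>k" "j\<noteq>k"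
  shows "invertible (cols (u i) (u j) (u k))"
proof -
  have D: "pt (u 0) \<noteq> pt (u 1) \<and> pt (u 0) \<noteq> pt (u 2) \<and> pt (u 0) \<noteq> pt (u 3) \<and>
     pt (u 1) \<noteq> pt (u 2) \<and> pt (u 1) \<noteq> pt (u 3) \<and> pt (u 2) \<noteq> pt (u 3)"
  proof -
    have "card {pt (u 0), pt (u 1), pt (u 2), pt (u 3)} = 4" using gp unfolding general_position_def by blast
    thus ?thesis by (rule card4_distinct)
  qed
  have ne: "pt (u a) \<noteq> pt (u b)" if ab: "a < 4" "b < 4" "a \<noteq> b" for a b
  proof -
    have "a = 0 \<or> a = 1 \<or> a = 2 \<or> a = 3" "b = 0 \<or> b = 1 \<or> b = 2 \<or> b = 3" using ab(1,2) by auto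
    thus ?thesis by (elim disjE) (metis D ab(3))+
  qed
  have mem: "pt (u a) \<in> {pt (u 0), pt (u 1), pt (u 2), pt (u 3)}" if "a < 4" for a
  proof -
    have "a = 0 \<or> a = 1 \<or> a = 2 \<or> a = 3" using that by auto
    thus ?thesis by (elim disjE) simp_all
  qed
  have gp': "\<forall>X\<in>{pt (u 0), pt (u 1), pt (u 2), pt (u 3)}. \<forall>Y\<in>{pt (u 0), pt (u 1), pt (u 2), pt (u 3)}.
      \<forall>Z\<in>{pt (u 0), pt (u 1), pt (u 2), pt (u 3)}. X \<noteq> Y \<and> X \<noteq> Z \<and> Y \<noteq> Z \<longrightarrow> \<not> collinear3 X Y Z"
    using gp unfolding general_position_def by (rule conjunct2)
  have "\<not> collinear3 (pt (u i)) (pt (u j)) (pt (u k))"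
    using gp'[rule_format, OF mem[OF ijk(1)] mem[OF ijk(2)] mem[OF ijk(3)]]
      ne[OF ijk(1,2,4)] ne[OF ijk(1,3,5)] ne[OF ijk(2,3,6)] by blast
  thus ?thesis by (rule ncol_inv)
qed

lemma card2:
  assumes c: "card {P0,P1,P2,P3} = 2" and s: "P1 = s P0" "P2 = s P1" "P3 = s P2" "P0 = s P3"
  shows "P2 = P0 \<and> P3 = P1"
proof -
  have n01: "P0 \<noteq> P1"
  proof
    assume e: "P0 = P1"
    have e2: "P2 = P1" unfolding s(2) using s(1) e by (simp only:)
    have e3: "P3 = P1" unfolding s(3) e2 using s(1) e by (simp only:)
    have "{P0,P1,P2,P3} = {P1}" unfolding e e2 e3 by simp
    hence "card {P0,P1,P2,P3} = 1" by simp
    thus False using c by simp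
  qed
  have "P2 = P0"
  proof (rule ccontr)
    assume n02: "P2 \<noteq> P0"
    have n12: "P2 \<noteq> P1"
    proof
      assume e: "P2 = P1"
      have e3: "P3 = P2" unfolding s(3) using s(2) e by (simp only:)
      have "P0 = P3" unfolding s(4) using s(3) e3 by (simp only:)
      thus False using n01 e3 e by (simp only:)
    qed
    have "card {P0,P1,P2} = 3" using n01 n02 n12 by (auto simp: card_insert_if)
    moreover have "card {P0,P1,P2} \<le> card {P0,P1,P2,P3}" by (rule card_mono) (simp, blast)
    ultimately show False using c by simp
  qed
  moreover have "P3 = P1" unfolding s(3) using s(1) \<open>P2 = P0\<close> by (simp only:)
  ultimately show ?thesis by (rule conjI)
qed
lemma act2: "act A {pt a, pt b} = {pt (A *v a), pt (A *v b)}"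
  by (simp add: act_def image_pt)

lemma act4: "act A {pt a, pt b, pt c, pt d} = {pt (A *v a), pt (A *v b), pt (A *v c), pt (A *v d)}"
  by (simp add: act_def image_pt)

context frobsetup
begin

lemma cp_rep:
  assumes "closed_point q d P"
  shows "\<exists>v. P = {pt v, pt (F v), pt (F (F v)), pt (F (F (F v)))} \<and> card P = d"
proof -
  obtain X where X: "X \<in> proj_points" "P = {(frob_pt q ^^ n) X | n. True}" "card P = d"
    using assms unfolding closed_point_def by blast
  obtain v where "X = pt v" using X(1) unfolding proj_points_def pt_def by blast
  thus ?thesis using X orbit by blast
qed

lemma cp2:
  assumes "closed_point q 2 P"
  shows "\<exists>v. P = {pt v, pt (F v)} \<and> prp (F (F v)) v"
proof -
  obtain v where v: "P = {pt v, pt (F v), pt (F (F v)), pt (F (F (F v)))}" "card P = 2"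
    using cp_rep[OF assms] by blast
  have c: "card {pt v, pt (F v), pt (F (F v)), pt (F (F (F v)))} = 2" using v(2) unfolding v(1) .
  have s1: "pt (F v) = frob_pt q (pt v)" by (simp only: frob_pt_pt)
  have s2: "pt (F (F v)) = frob_pt q (pt (F v))" by (simp only: frob_pt_pt)
  have s3: "pt (F (F (F v))) = frob_pt q (pt (F (F v)))" by (simp only: frob_pt_pt)
  have s4: "pt v = frob_pt q (pt (F (F (F v))))" by (simp only: frob_pt_pt F4)
  have e: "pt (F (F v)) = pt v" "pt (F (F (F v))) = pt (F v)"
    using card2[OF c s1 s2 s3 s4] by blast+
  have "P = {pt v, pt (F v), pt v, pt (F v)}" unfolding v(1) e ..
  also have "\<dots> = {pt v, pt (F v)}" by blast
  finally have "P = {pt v, pt (F v)}" .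
  moreover have "prp (F (F v)) v" using e(1) by (rule pt_prp)
  ultimately show ?thesis by blast
qed

end

theorem lemma4p1:
  fixes p m q :: nat
  assumes "prime p" and "m \<ge> 1" and "q = p ^ m"
    and "CARD('a::{field,finite}) = q ^ 4"
  shows "(\<forall>p0 p' q0 q' :: ('a ^ 3) set set.
            closed_point q 2 p0 \<and> closed_point q 2 p' \<and>
            closed_point q 2 q0 \<and> closed_point q 2 q' \<and>
            general_position (p0 \<union> p') \<and> general_position (q0 \<union> q')
            \<longrightarrow> (\<exists>A. k_automorphism q A \<and> act A p0 = q0 \<and> act A p' = q'))
       \<and> (\<forall>p0 q0 :: ('a ^ 3) set set.
            closed_point q 4 p0 \<and> closed_point q 4 q0 \<and>
            general_position p0 \<and> general_position q0
            \<longrightarrow> (\<exists>A. k_automorphism q A \<and> act A p0 = q0))"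
proof -
  have fs: "frobsetup TYPE('a) q" using frobsetup_intro[OF assms] .
  let ?F = "frob_vec q :: 'a^3 \<Rightarrow> 'a^3"
  have part1: "\<exists>A. k_automorphism q A \<and> act A p0 = q0 \<and> act A p' = q'"
    if H: "closed_point q 2 p0" "closed_point q 2 p'" "closed_point q 2 q0" "closed_point q 2 q'"
      "general_position (p0 \<union> p')" "general_position (q0 \<union> q')"
    for p0 p' q0 q' :: "('a ^ 3) set set"
  proof -
    obtain v1 where v1: "p0 = {pt v1, pt (?F v1)}" "prp (?F (?F v1)) v1" using frobsetup.cp2[OF fs H(1)] by blast
    obtain v2 where v2: "p' = {pt v2, pt (?F v2)}" "prp (?F (?F v2)) v2" using frobsetup.cp2[OF fs H(2)] by blast
    obtain v3 where v3: "q0 = {pt v3, pt (?F v3)}" "prp (?F (?F v3)) v3" using frobsetup.cp2[OF fs H(3)] by blast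
    obtain v4 where v4: "q' = {pt v4, pt (?F v4)}" "prp (?F (?F v4)) v4" using frobsetup.cp2[OF fs H(4)] by blast
    define u where "u = (\<lambda>i::nat. if i = 0 then v1 else if i = 1 then ?F v1 else if i = 2 then v2 else ?F v2)"
    define w where "w = (\<lambda>i::nat. if i = 0 then v3 else if i = 1 then ?F v3 else if i = 2 then v4 else ?F v4)"
    have gpu: "general_position {pt (u 0), pt (u 1), pt (u 2), pt (u 3)}"
      using H(5) unfolding v1 v2 u_def by (simp add: insert_commute)
    have gpw: "general_position {pt (w 0), pt (w 1), pt (w 2), pt (w 3)}"
      using H(6) unfolding v3 v4 w_def by (simp add: insert_commute)
    have fr: "\<exists>i<4. prp (?F (u i)) (u j) \<and> prp (?F (w i)) (w j)" if "j < 4" for j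
    proof -
      have "j = 0 \<or> j = 1 \<or> j = 2 \<or> j = 3" using that by auto
      thus ?thesis
      proof (elim disjE)
        assume "j = 0" thus ?thesis using v1(2) v3(2) by (intro exI[of _ 1]) (simp add: u_def w_def)
      next
        assume "j = 1" thus ?thesis by (intro exI[of _ 0]) (simp add: u_def w_def prp_refl)
      next
        assume "j = 2" thus ?thesis using v2(2) v4(2) by (intro exI[of _ 3]) (simp add: u_def w_def)
      next
        assume "j = 3" thus ?thesis by (intro exI[of _ 2]) (simp add: u_def w_def prp_refl)
      qed
    qed
    obtain A where A: "k_automorphism q A" "\<forall>i<4. prp (A *v u i) (w i)"
      using frobsetup.key[OF fs, of u w, OF gp_inv[OF gpu] gp_inv[OF gpw] fr] by blast
    have e: "pt (A *v u i) = pt (w i)" if "i < 4" for i using A(2) that prp_pt by blast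
    have "act A p0 = q0" unfolding v1 v3 act2 using e[of 0] e[of 1] by (simp add: u_def w_def)
    moreover have "act A p' = q'" unfolding v2 v4 act2 using e[of 2] e[of 3] by (simp add: u_def w_def)
    ultimately show ?thesis using A(1) by blast
  qed
  have part2: "\<exists>A. k_automorphism q A \<and> act A p0 = q0"
    if H: "closed_point q 4 p0" "closed_point q 4 q0" "general_position p0" "general_position q0"
    for p0 q0 :: "('a ^ 3) set set"
  proof -
    obtain v1 where v1: "p0 = {pt v1, pt (?F v1), pt (?F (?F v1)), pt (?F (?F (?F v1)))}"
      using frobsetup.cp_rep[OF fs H(1)] by blast
    obtain v3 where v3: "q0 = {pt v3, pt (?F v3), pt (?F (?F v3)), pt (?F (?F (?F v3)))}"
      using frobsetup.cp_rep[OF fs H(2)] by blast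
    define u where "u = (\<lambda>i::nat. if i = 0 then v1 else if i = 1 then ?F v1 else if i = 2 then ?F (?F v1) else ?F (?F (?F v1)))"
    define w where "w = (\<lambda>i::nat. if i = 0 then v3 else if i = 1 then ?F v3 else if i = 2 then ?F (?F v3) else ?F (?F (?F v3)))"
    have gpu: "general_position {pt (u 0), pt (u 1), pt (u 2), pt (u 3)}"
      using H(3) unfolding v1 u_def by simp
    have gpw: "general_position {pt (w 0), pt (w 1), pt (w 2), pt (w 3)}"
      using H(4) unfolding v3 w_def by simp
    have fr: "\<exists>i<4. prp (?F (u i)) (u j) \<and> prp (?F (w i)) (w j)" if "j < 4" for j
    proof -
      have "j = 0 \<or> j = 1 \<or> j = 2 \<or> j = 3" using that by auto
      thus ?thesis
      proof (elim disjE)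
        assume "j = 0" thus ?thesis by (intro exI[of _ 3]) (simp add: u_def w_def frobsetup.F4[OF fs] prp_refl)
      next
        assume "j = 1" thus ?thesis by (intro exI[of _ 0]) (simp add: u_def w_def prp_refl)
      next
        assume "j = 2" thus ?thesis by (intro exI[of _ 1]) (simp add: u_def w_def prp_refl)
      next
        assume "j = 3" thus ?thesis by (intro exI[of _ 2]) (simp add: u_def w_def prp_refl)
      qed
    qed
    obtain A where A: "k_automorphism q A" "\<forall>i<4. prp (A *v u i) (w i)"
      using frobsetup.key[OF fs, of u w, OF gp_inv[OF gpu] gp_inv[OF gpw] fr] by blast
    have e: "pt (A *v u i) = pt (w i)" if "i < 4" for i using A(2) that prp_pt by blast
    have "act A p0 = q0" unfolding v1 v3 act4 using e[of 0] e[of 1] e[of 2] e[of 3]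
      by (simp add: u_def w_def)
    thus ?thesis using A(1) by blast
  qed
  show ?thesis
  proof (intro conjI allI impI)
    fix p0 p' q0 q' :: "('a ^ 3) set set"
    assume h: "closed_point q 2 p0 \<and> closed_point q 2 p' \<and>
            closed_point q 2 q0 \<and> closed_point q 2 q' \<and>
            general_position (p0 \<union> p') \<and> general_position (q0 \<union> q')"
    show "\<exists>A. k_automorphism q A \<and> act A p0 = q0 \<and> act A p' = q'"
      by (rule part1) (use h in blast)+
  next
    fix p0 q0 :: "('a ^ 3) set set"
    assume h: "closed_point q 4 p0 \<and> closed_point q 4 q0 \<and>
            general_position p0 \<and> general_position q0"
    show "\<exists>A. k_automorphism q A \<and> act A p0 = q0"
      by (rule part2) (use h in blast)+
  qed
qed


end
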